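(* Let $\mathbf a=(a_1,\dots,a_q)$ be a graceful permutation of length $q$ and let $p$ be an even integer with $2(q-1)/3<p<2q$. Then either $\mathbf a$ or its complement $\bar{\mathbf a}=(q-1-a_1,\dots,q-1-a_q)$ has two adjacent entries $x$ and $y$ (in either order) with $x<y<2(y-x)=p$.
   Context: A graceful permutation of length $n$ is an arrangement $(a_1,\dots,a_n)$ of the integers $\{0,1,\dots,n-1\}$ whose absolute differences $|a_{i+1}-a_i|$ ($1\le i\le n-1$) are exactly $\{1,\dots,n-1\}$. *)

theory Defs
  imports Main
begin

definition graceful_perm :: "nat list \<Rightarrow> bool" where
  "graceful_perm a \<longleftrightarrow>
     distinct a \<and> set a = {0..<length a} \<and>
     {nat \<bar>int (a ! (i+1)) - int (a ! i)\<bar> | i. i + 1 < length a} = {1..<length a}"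

definition complement :: "nat list \<Rightarrow> nat list" where
  "complement a = map (\<lambda>x. length a - 1 - x) a"

definition has_adj_pair :: "nat list \<Rightarrow> int \<Rightarrow> bool" where
  "has_adj_pair a p \<longleftrightarrow>
     (\<exists>i x y. i + 1 < length a \<and> {x, y} = {a ! i, a ! (i+1)} \<and>
        x < y \<and> int y < 2 * (int y - int x) \<and> 2 * (int y - int x) = p)"

end

theory Submission
  imports Defs
begin

theorem lemma5p8:
  fixes a :: "nat list" and q :: nat and p :: int
  assumes "graceful_perm a" and "length a = q"
    and "even p" and "2 * (int q - 1) < 3 * p" and "p < 2 * int q"
  shows "has_adj_pair a p \<or> has_adj_pair (complement a) p"
proof -
  obtain k where pk: "p = 2 * k" using assms(3) by blast
  define d where "d = nat k"
  have q1: "q \<ge> 1" using assms(4,5) pk by presburger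
  have kpos: "k \<ge> 1" using assms(4,5) pk q1 by presburger
  have dk: "int d = k" using kpos d_def by simp
  have drange: "d \<in> {1..<length a}" using dk kpos assms(2,5) pk by simp
  have gp: "set a = {0..<length a}"
    "{nat \<bar>int (a ! (i+1)) - int (a ! i)\<bar> | i. i + 1 < length a} = {1..<length a}"
    using assms(1) unfolding graceful_perm_def by auto
  then obtain i where i: "i + 1 < length a" "d = nat \<bar>int (a ! (i+1)) - int (a ! i)\<bar>"
    using drange by blast
  have bi: "a ! i < q" "a ! (i+1) < q"
    using gp(1) i(1) assms(2) nth_mem[of i a] nth_mem[of "i+1" a] by auto
  define u where "u = min (a ! i) (a ! (i+1))"
  define v where "v = max (a ! i) (a ! (i+1))"
  have uv: "{u, v} = {a ! i, a ! (i+1)}" unfolding u_def v_def by (auto simp: min_def max_def)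
  have vud: "int v = int u + int d" using i(2) unfolding u_def v_def by (auto simp: min_def max_def)
  have vq: "v < q" using bi v_def by simp
  show ?thesis
  proof (cases "u < d")
    case True
    have "has_adj_pair a p"
      unfolding has_adj_pair_def
      apply (rule exI[of _ i], rule exI[of _ u], rule exI[of _ v])
      using i(1) uv vud True pk dk by auto
    then show ?thesis by simp
  next
    case False
    let ?c = "complement a"
    have lc: "length ?c = q" using assms(2) by (simp add: complement_def)
    have ci: "?c ! i = q - 1 - a ! i" "?c ! (i+1) = q - 1 - a ! (i+1)"
      using i(1) assms(2) by (auto simp: complement_def)
    have uv2: "{q - 1 - v, q - 1 - u} = {?c ! i, ?c ! (i+1)}"
      unfolding ci u_def v_def by (auto simp: min_def max_def)
    have "has_adj_pair ?c p"
      unfolding has_adj_pair_def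
      apply (rule exI[of _ i], rule exI[of _ "q - 1 - v"], rule exI[of _ "q - 1 - u"])
      using i(1) lc uv2 vud False pk dk vq assms(2,4) by auto
    then show ?thesis by simp
  qed
qed

end
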